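(* Let $A\in\mathbb{R}^{N\times N}$, $B\in\mathbb{R}^{N\times m}$, $C\in\mathbb{R}^{p\times N}$, $D\in\mathbb{R}^{p\times m}$ with all eigenvalues of $A$ having negative real part. Let $\mathcal{W}:=L^2(-\infty,0;\mathbb{R}^m)$, $\mathcal{Y}:=L^2(0,\infty;\mathbb{R}^p)$ with standard inner products, and let $\mathcal{H}\colon\mathcal{W}\to\mathcal{Y}$, $(\mathcal{H}u)(t)=\int_{-\infty}^0 h(t-s)u(s)\,\mathrm{d}s$ with $h(t)=Ce^{tA}B+D\delta(t)$, have singular value decomposition $\mathcal{H}=\sum_{i=1}^N\sigma_i\langle\cdot,f_i\rangle_{\mathcal{W}}\,g_i$ with orthonormal $\{f_i\}\subset\mathcal{W}$, orthonormal $\{g_i\}\subset\mathcal{Y}$, $\sigma_1\ge\dots\ge\sigma_N\ge0$ (and $\sigma_{N+1}:=0$). Let $\mathbb{W}$ be the closed unit ball of $\mathcal{W}$. Then for $n=1,\dots,N$, the subspace $\widehat{\mathcal{W}}_n=\operatorname{span}\{f_1,\dots,f_n\}$ is an $n$-dimensional active subspace of $\mathcal{H}$ on $\mathbb{W}$, and the corresponding worst-case error is $$\sup_{w\in\mathbb{W}}\|\mathcal{H}(w)-\mathcal{H}(\pi_{\widehat{\mathcal{W}}_n}w)\|_{\mathcal{Y}}=\inf_{\mathcal{W}_n\le\mathcal{W},\,\dim\mathcal{W}_n\le n}\ \sup_{w\in\mathbb{W}}\|\mathcal{H}(w)-\mathcal{H}(\pi_{\mathcal{W}_n}w)\|_{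\mathcal{Y}}=\sigma_{n+1}.$$
   Context: An $n$-dimensional subspace $\widehat{\mathcal{W}}_n\le\mathcal{W}$ is called an active subspace of an operator $\mathcal{S}\colon\mathcal{W}\to\mathcal{Y}$ on a set $\mathbb{W}\subseteq\mathcal{W}$ if $\sup_{w\in\mathbb{W}}\|\mathcal{S}(w)-\mathcal{S}(\pi_{\widehat{\mathcal{W}}_n}w)\|=\inf_{\mathcal{W}_n\le\mathcal{W},\,\dim\mathcal{W}_n\le n}\sup_{w\in\mathbb{W}}\|\mathcal{S}(w)-\mathcal{S}(\pi_{\mathcal{W}_n}w)\|$, where $\pi_{\mathcal{W}_n}$ denotes the orthogonal projection onto $\mathcal{W}_n$. *)

theory Defs
  imports "HOL-Analysis.Analysis"
begin

fun matpow :: "real^'n^'n \<Rightarrow> nat \<Rightarrow> real^'n^'n" where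
  "matpow M 0 = mat 1"
| "matpow M (Suc k) = M ** matpow M k"

definition mat_exp :: "real^'n^'n \<Rightarrow> real^'n^'n" where
  "mat_exp M = (\<Sum>k. (1 / fact k) *\<^sub>R matpow M k)"

definition complex_eigenvalue :: "real^'n^'n \<Rightarrow> complex \<Rightarrow> bool" where
  "complex_eigenvalue A l \<longleftrightarrow>
     (\<exists>v :: complex^'n. v \<noteq> 0 \<and>
        (\<chi> i j. complex_of_real (A $ i $ j)) *v v = l *s v)"

definition L2 :: "real set \<Rightarrow> (real \<Rightarrow> 'a::euclidean_space) set" where
  "L2 S = {u. set_borel_measurable lborel S u \<and>
              set_integrable lborel S (\<lambda>x. (norm (u x))\<^sup>2)}"

definition L2_inner :: "real set \<Rightarrow> (real \<Rightarrow> 'a::euclidean_space) \<Rightarrow> (real \<Rightarrow> 'a) \<Rightarrow> real" where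
  "L2_inner S u v = (LINT x:S|lborel. inner (u x) (v x))"

definition L2_norm :: "real set \<Rightarrow> (real \<Rightarrow> 'a::euclidean_space) \<Rightarrow> real" where
  "L2_norm S u = sqrt (L2_inner S u u)"

definition fspan :: "nat \<Rightarrow> (nat \<Rightarrow> real \<Rightarrow> 'a::euclidean_space) \<Rightarrow> (real \<Rightarrow> 'a) set" where
  "fspan n v = {(\<lambda>x. \<Sum>i<n. c i *\<^sub>R v i x) | c. True}"

definition L2_subspace_dim_le :: "real set \<Rightarrow> nat \<Rightarrow> (real \<Rightarrow> 'a::euclidean_space) set \<Rightarrow> bool" where
  "L2_subspace_dim_le S n V \<longleftrightarrow> (\<exists>v. (\<forall>i<n. v i \<in> L2 S) \<and> V = fspan n v)"

text \<open>Subspaces of L2(S) of dimension exactly n: spanned by n elements that are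
  linearly independent in L2(S) (i.e. modulo null functions).\<close>
definition L2_subspace_dim_eq :: "real set \<Rightarrow> nat \<Rightarrow> (real \<Rightarrow> 'a::euclidean_space) set \<Rightarrow> bool" where
  "L2_subspace_dim_eq S n V \<longleftrightarrow> (\<exists>v. (\<forall>i<n. v i \<in> L2 S) \<and> V = fspan n v \<and>
      (\<forall>c. L2_norm S (\<lambda>x. \<Sum>i<n. c i *\<^sub>R v i x) = 0 \<longrightarrow> (\<forall>i<n. c i = 0)))"

definition L2_proj :: "real set \<Rightarrow> (real \<Rightarrow> 'a::euclidean_space) set \<Rightarrow> (real \<Rightarrow> 'a) \<Rightarrow> (real \<Rightarrow> 'a)" where
  "L2_proj S V w = (SOME p. p \<in> V \<and> (\<forall>x\<in>V. L2_inner S (\<lambda>s. w s - p s) x = 0))"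

definition worst_err ::
  "real set \<Rightarrow> real set \<Rightarrow> ((real \<Rightarrow> 'a::euclidean_space) \<Rightarrow> (real \<Rightarrow> 'b::euclidean_space))
   \<Rightarrow> (real \<Rightarrow> 'a) set \<Rightarrow> (real \<Rightarrow> 'a) set \<Rightarrow> real" where
  "worst_err S T Op Wset V =
     (SUP w\<in>Wset. L2_norm T (\<lambda>t. Op w t - Op (L2_proj S V w) t))"

definition optimal_err ::
  "real set \<Rightarrow> real set \<Rightarrow> ((real \<Rightarrow> 'a::euclidean_space) \<Rightarrow> (real \<Rightarrow> 'b::euclidean_space))
   \<Rightarrow> (real \<Rightarrow> 'a) set \<Rightarrow> nat \<Rightarrow> real" where
  "optimal_err S T Op Wset n =
     (INF V\<in>{V. L2_subspace_dim_le S n V}. worst_err S T Op Wset V)"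

definition active_subspace ::
  "real set \<Rightarrow> real set \<Rightarrow> ((real \<Rightarrow> 'a::euclidean_space) \<Rightarrow> (real \<Rightarrow> 'b::euclidean_space))
   \<Rightarrow> (real \<Rightarrow> 'a) set \<Rightarrow> nat \<Rightarrow> (real \<Rightarrow> 'a) set \<Rightarrow> bool" where
  "active_subspace S T Op Wset n V \<longleftrightarrow>
     L2_subspace_dim_eq S n V \<and> worst_err S T Op Wset V = optimal_err S T Op Wset n"

text \<open>For t > 0 and s \<le> 0 one has t - s > 0, so the feedthrough term D \<delta>(t-s)
  does not contribute; the kernel is C e^{(t-s)A} B.\<close>
definition hankel ::
  "real^'N^'N \<Rightarrow> real^'m^'N \<Rightarrow> real^'N^'p \<Rightarrow> (real \<Rightarrow> real^'m) \<Rightarrow> (real \<Rightarrow> real^'p)" where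
  "hankel A B C u = (\<lambda>t. LINT s:{..0}|lborel. C *v (mat_exp ((t - s) *\<^sub>R A) *v (B *v u s)))"

end

theory Submission
  imports Defs
begin

lemma inner_ind: "inner (indicator S x *\<^sub>R a) (indicator S x *\<^sub>R b) = indicator S x *\<^sub>R inner a b"
  for a b :: "'a::real_inner"
  by (simp add: indicator_def)

lemma ab_le_sq: "0 \<le> a \<Longrightarrow> 0 \<le> b \<Longrightarrow> a * b \<le> a\<^sup>2 + b\<^sup>2" for a b :: real
proof -
  assume "0 \<le> a" "0 \<le> b"
  have "0 \<le> (a - b)\<^sup>2" by simp
  then have "2 * (a * b) \<le> a\<^sup>2 + b\<^sup>2" by (simp add: power2_eq_square algebra_simps)
  moreover have "0 \<le> a * b" using \<open>0 \<le> a\<close> \<open>0 \<le> b\<close> by simp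
  ultimately show ?thesis by linarith
qed

lemma ind_sq: "indicator S x * (indicator S x * (y::real)) = indicator S x * y"
  by (simp add: indicator_def)

lemma L2_inner_integrable:
  assumes u: "u \<in> L2 S" and v: "v \<in> L2 S"
  shows "set_integrable lborel S (\<lambda>x. inner (u x) (v x))"
proof (rule set_integrable_bound[where f="\<lambda>x. (norm (u x))\<^sup>2 + (norm (v x))\<^sup>2"])
  show "set_integrable lborel S (\<lambda>x. (norm (u x))\<^sup>2 + (norm (v x))\<^sup>2)"
    using u v unfolding L2_def by (auto)
  have mu: "(\<lambda>x. indicator S x *\<^sub>R u x) \<in> borel_measurable lborel"
   and mv: "(\<lambda>x. indicator S x *\<^sub>R v x) \<in> borel_measurable lborel"
    using u v unfolding L2_def set_borel_measurable_def by auto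
  have "(\<lambda>x. inner (indicator S x *\<^sub>R u x) (indicator S x *\<^sub>R v x)) \<in> borel_measurable lborel"
    using mu mv by measurable
  then show "set_borel_measurable lborel S (\<lambda>x. inner (u x) (v x))"
    unfolding set_borel_measurable_def by (simp add: inner_ind ind_sq)
  show "AE x in lborel. x \<in> S \<longrightarrow> norm (inner (u x) (v x)) \<le> norm ((norm (u x))\<^sup>2 + (norm (v x))\<^sup>2)"
  proof (intro AE_I2 impI)
    fix x
    have "\<bar>inner (u x) (v x)\<bar> \<le> norm (u x) * norm (v x)" by (rule Cauchy_Schwarz_ineq2)
    also have "\<dots> \<le> (norm (u x))\<^sup>2 + (norm (v x))\<^sup>2"
      by (rule ab_le_sq) auto
    finally show "norm (inner (u x) (v x)) \<le> norm ((norm (u x))\<^sup>2 + (norm (v x))\<^sup>2)" by simp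
  qed
qed

lemma L2_measI:
  assumes "u \<in> L2 S" shows "(\<lambda>x. indicator S x *\<^sub>R u x) \<in> borel_measurable lborel"
  using assms unfolding L2_def set_borel_measurable_def by auto

lemma L2_zero: "(\<lambda>x. 0) \<in> L2 S"
  unfolding L2_def set_borel_measurable_def set_integrable_def by simp

lemma L2_scale:
  assumes "u \<in> L2 S" shows "(\<lambda>x. c *\<^sub>R u x) \<in> L2 S"
proof -
  have m: "(\<lambda>x. indicator S x *\<^sub>R u x) \<in> borel_measurable lborel" using assms by (rule L2_measI)
  have eq: "(\<lambda>x. indicator S x *\<^sub>R (c *\<^sub>R u x)) = (\<lambda>x. c *\<^sub>R (indicator S x *\<^sub>R u x))"
    by (rule ext) simp
  have 1: "set_borel_measurable lborel S (\<lambda>x. c *\<^sub>R u x)"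
    unfolding set_borel_measurable_def eq using m by measurable
  have "set_integrable lborel S (\<lambda>x. c\<^sup>2 * (norm (u x))\<^sup>2)"
    using assms unfolding L2_def by auto
  then have 2: "set_integrable lborel S (\<lambda>x. (norm (c *\<^sub>R u x))\<^sup>2)"
    by (simp add: power_mult_distrib)
  show ?thesis using 1 2 unfolding L2_def by auto
qed

lemma L2_add:
  assumes u: "u \<in> L2 S" and v: "v \<in> L2 S" shows "(\<lambda>x. u x + v x) \<in> L2 S"
proof -
  have "(\<lambda>x. indicator S x *\<^sub>R u x + indicator S x *\<^sub>R v x) \<in> borel_measurable lborel"
    using L2_measI[OF u] L2_measI[OF v] by measurable
  then have 1: "set_borel_measurable lborel S (\<lambda>x. u x + v x)"
    unfolding set_borel_measurable_def by (simp add: scaleR_add_right)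
  have "set_integrable lborel S (\<lambda>x. inner (u x) (u x) + 2 * inner (u x) (v x) + inner (v x) (v x))"
    using L2_inner_integrable[OF u u] L2_inner_integrable[OF u v] L2_inner_integrable[OF v v]
    by (intro set_integral_add) auto
  moreover have "(\<lambda>x. inner (u x) (u x) + 2 * inner (u x) (v x) + inner (v x) (v x))
     = (\<lambda>x. (norm (u x + v x))\<^sup>2)"
    by (rule ext) (simp add: power2_norm_eq_inner inner_add_left inner_add_right inner_commute)
  ultimately have 2: "set_integrable lborel S (\<lambda>x. (norm (u x + v x))\<^sup>2)" by simp
  show ?thesis using 1 2 unfolding L2_def by auto
qed

lemma L2_diff:
  assumes u: "u \<in> L2 S" and v: "v \<in> L2 S" shows "(\<lambda>x. u x - v x) \<in> L2 S"
  using L2_add[OF u L2_scale[OF v, of "-1"]] by simp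

lemma L2_sum:
  assumes "finite I" "\<And>i. i \<in> I \<Longrightarrow> u i \<in> L2 S"
  shows "(\<lambda>x. \<Sum>i\<in>I. c i *\<^sub>R u i x) \<in> L2 S"
  using assms
proof (induction I rule: finite_induct)
  case empty then show ?case by (simp add: L2_zero)
next
  case (insert a I)
  then show ?case by (simp add: L2_add L2_scale)
qed

lemma L2_inner_commute: "L2_inner S u v = L2_inner S v u"
  unfolding L2_inner_def by (simp add: inner_commute)

lemma L2_inner_add_left:
  assumes "u \<in> L2 S" "v \<in> L2 S" "w \<in> L2 S"
  shows "L2_inner S (\<lambda>x. u x + v x) w = L2_inner S u w + L2_inner S v w"
  unfolding L2_inner_def inner_add_left
  by (rule set_integral_add(2)) (use assms L2_inner_integrable in auto)

lemma L2_inner_scale_left: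
  "L2_inner S (\<lambda>x. c *\<^sub>R u x) w = c * L2_inner S u w"
  unfolding L2_inner_def by simp

lemma L2_inner_diff_left:
  assumes "u \<in> L2 S" "v \<in> L2 S" "w \<in> L2 S"
  shows "L2_inner S (\<lambda>x. u x - v x) w = L2_inner S u w - L2_inner S v w"
  unfolding L2_inner_def inner_diff_left
  by (rule set_integral_diff(2)) (use assms L2_inner_integrable in auto)

lemma L2_inner_sum_left:
  assumes "finite I" "\<And>i. i \<in> I \<Longrightarrow> u i \<in> L2 S" "w \<in> L2 S"
  shows "L2_inner S (\<lambda>x. \<Sum>i\<in>I. c i *\<^sub>R u i x) w = (\<Sum>i\<in>I. c i * L2_inner S (u i) w)"
  using assms
proof (induction I rule: finite_induct)
  case empty then show ?case by (simp add: L2_inner_def)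
next
  case (insert a I)
  have "L2_inner S (\<lambda>x. \<Sum>i\<in>insert a I. c i *\<^sub>R u i x) w
      = L2_inner S (\<lambda>x. c a *\<^sub>R u a x + (\<Sum>i\<in>I. c i *\<^sub>R u i x)) w"
    using insert by simp
  also have "\<dots> = L2_inner S (\<lambda>x. c a *\<^sub>R u a x) w + L2_inner S (\<lambda>x. \<Sum>i\<in>I. c i *\<^sub>R u i x) w"
    by (rule L2_inner_add_left) (use insert in \<open>auto intro: L2_scale L2_sum\<close>)
  also have "\<dots> = c a * L2_inner S (u a) w + L2_inner S (\<lambda>x. \<Sum>i\<in>I. c i *\<^sub>R u i x) w"
    by (simp only: L2_inner_scale_left)
  finally show ?case using insert by simp
qed

lemma L2_inner_add_right:
  assumes "u \<in> L2 S" "v \<in> L2 S" "w \<in> L2 S"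
  shows "L2_inner S w (\<lambda>x. u x + v x) = L2_inner S w u + L2_inner S w v"
  by (subst (1 2 3) L2_inner_commute) (rule L2_inner_add_left[OF assms])

lemma L2_inner_diff_right:
  assumes "u \<in> L2 S" "v \<in> L2 S" "w \<in> L2 S"
  shows "L2_inner S w (\<lambda>x. u x - v x) = L2_inner S w u - L2_inner S w v"
  by (subst (1 2 3) L2_inner_commute) (rule L2_inner_diff_left[OF assms])

lemma L2_inner_scale_right:
  "L2_inner S w (\<lambda>x. c *\<^sub>R u x) = c * L2_inner S w u"
  by (subst (1 2) L2_inner_commute) (rule L2_inner_scale_left)

lemma L2_inner_sum_right:
  assumes "finite I" "\<And>i. i \<in> I \<Longrightarrow> u i \<in> L2 S" "w \<in> L2 S"
  shows "L2_inner S w (\<lambda>x. \<Sum>i\<in>I. c i *\<^sub>R u i x) = (\<Sum>i\<in>I. c i * L2_inner S w (u i))"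
proof -
  have c: "\<And>i. L2_inner S (u i) w = L2_inner S w (u i)" by (rule L2_inner_commute)
  show ?thesis
    by (subst L2_inner_commute) (simp only: L2_inner_sum_left[OF assms] c)
qed

lemma L2_inner_nonneg: "0 \<le> L2_inner S u u"
  unfolding L2_inner_def set_lebesgue_integral_def
  by (intro integral_nonneg_AE AE_I2) (simp add: indicator_def)

lemma L2_null_orth:
  assumes u: "u \<in> L2 S" and v: "v \<in> L2 S" and z: "L2_inner S v v = 0"
  shows "L2_inner S u v = 0"
proof (rule ccontr)
  assume b: "L2_inner S u v \<noteq> 0"
  define a where "a = L2_inner S u u"
  define b where "b = L2_inner S u v"
  define t where "t = - (a + 1) / (2 * b)"
  have L: "(\<lambda>x. u x + t *\<^sub>R v x) \<in> L2 S" using u v by (intro L2_add L2_scale)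
  have "0 \<le> L2_inner S (\<lambda>x. u x + t *\<^sub>R v x) (\<lambda>x. u x + t *\<^sub>R v x)" by (rule L2_inner_nonneg)
  also have "\<dots> = L2_inner S u (\<lambda>x. u x + t *\<^sub>R v x) + t * L2_inner S v (\<lambda>x. u x + t *\<^sub>R v x)"
    using u v L by (simp add: L2_inner_add_left L2_scale L2_inner_scale_left)
  also have "\<dots> = a + 2 * t * b"
    using u v z by (simp add: L2_inner_add_right L2_scale L2_inner_scale_right a_def b_def
        L2_inner_commute[of S v u] algebra_simps)
  also have "\<dots> = -1" using b unfolding t_def b_def by (simp add: field_simps)
  finally show False by simp
qed

lemma proj_exists:
  fixes n :: nat and v :: "nat \<Rightarrow> real \<Rightarrow> 'a::euclidean_space"
  assumes "\<forall>i<n. v i \<in> L2 S" "w \<in> L2 S"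
  shows "\<exists>c. \<forall>j<n. L2_inner S (\<lambda>x. w x - (\<Sum>i<n. c i *\<^sub>R v i x)) (v j) = 0"
  using assms
proof (induction n arbitrary: w)
  case 0 show ?case by simp
next
  case (Suc n)
  have vL: "\<And>i. i < Suc n \<Longrightarrow> v i \<in> L2 S" using Suc.prems by auto
  from Suc.IH[of w] Suc.prems obtain c where
    c: "\<forall>j<n. L2_inner S (\<lambda>x. w x - (\<Sum>i<n. c i *\<^sub>R v i x)) (v j) = 0" by auto
  from Suc.IH[of "v n"] vL obtain d where
    d: "\<forall>j<n. L2_inner S (\<lambda>x. v n x - (\<Sum>i<n. d i *\<^sub>R v i x)) (v j) = 0" by auto
  define P where "P = (\<lambda>x. \<Sum>i<n. c i *\<^sub>R v i x)"
  define q where "q = (\<lambda>x. \<Sum>i<n. d i *\<^sub>R v i x)"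
  define r where "r = (\<lambda>x. v n x - q x)"
  define e where "e = (\<lambda>x. w x - P x)"
  have PL: "P \<in> L2 S" unfolding P_def by (rule L2_sum) (use vL in auto)
  have qL: "q \<in> L2 S" unfolding q_def by (rule L2_sum) (use vL in auto)
  have rL: "r \<in> L2 S" unfolding r_def by (rule L2_diff) (use vL qL in auto)
  have eL: "e \<in> L2 S" unfolding e_def by (rule L2_diff) (use Suc.prems PL in auto)
  have e_orth: "\<And>j. j < n \<Longrightarrow> L2_inner S e (v j) = 0" using c by (simp add: e_def P_def)
  have r_orth: "\<And>j. j < n \<Longrightarrow> L2_inner S r (v j) = 0" using d by (simp add: r_def q_def)
  have orth_q: "L2_inner S h q = 0" if "h \<in> L2 S" "\<And>j. j < n \<Longrightarrow> L2_inner S h (v j) = 0" for h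
    unfolding q_def using that vL by (subst L2_inner_sum_right) auto
  have vn: "v n = (\<lambda>x. r x + q x)" by (simp add: r_def)
  show ?case
  proof (cases "L2_inner S r r = 0")
    case True
    let ?c = "c(n := 0)"
    have s: "(\<Sum>i<Suc n. ?c i *\<^sub>R v i x) = P x" for x
    proof -
      have "(\<Sum>i<n. ?c i *\<^sub>R v i x) = (\<Sum>i<n. c i *\<^sub>R v i x)" by (rule sum.cong) auto
      then show ?thesis by (simp add: P_def)
    qed
    have "\<forall>j<Suc n. L2_inner S (\<lambda>x. w x - (\<Sum>i<Suc n. ?c i *\<^sub>R v i x)) (v j) = 0"
    proof (intro allI impI)
      fix j assume j: "j < Suc n"
      have eq: "(\<lambda>x. w x - (\<Sum>i<Suc n. ?c i *\<^sub>R v i x)) = e" by (simp add: s e_def P_def)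
      show "L2_inner S (\<lambda>x. w x - (\<Sum>i<Suc n. ?c i *\<^sub>R v i x)) (v j) = 0"
      proof (cases "j < n")
        case True then show ?thesis using e_orth eq by simp
      next
        case False
        then have "j = n" using j by simp
        have "L2_inner S e (v n) = L2_inner S e r + L2_inner S e q"
          unfolding vn by (rule L2_inner_add_right) (use rL qL eL in auto)
        also have "\<dots> = 0" using L2_null_orth[OF eL rL True] orth_q[OF eL e_orth] by simp
        finally show ?thesis using eq \<open>j = n\<close> by simp
      qed
    qed
    then show ?thesis by blast
  next
    case False
    define \<alpha> where "\<alpha> = L2_inner S e r / L2_inner S r r"
    let ?c = "\<lambda>i. if i < n then c i - \<alpha> * d i else \<alpha>"
    have s: "(\<Sum>i<Suc n. ?c i *\<^sub>R v i x) = P x + \<alpha> *\<^sub>R r x" for x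
    proof -
      have "(\<Sum>i<n. ?c i *\<^sub>R v i x) = (\<Sum>i<n. c i *\<^sub>R v i x - \<alpha> *\<^sub>R (d i *\<^sub>R v i x))"
        by (rule sum.cong) (auto simp: scaleR_diff_left)
      also have "\<dots> = P x - \<alpha> *\<^sub>R q x"
        by (simp add: P_def q_def sum_subtractf scaleR_sum_right)
      finally have B: "(\<Sum>i<n. ?c i *\<^sub>R v i x) = P x - \<alpha> *\<^sub>R q x" .
      have A: "(\<Sum>i<Suc n. ?c i *\<^sub>R v i x) = (\<Sum>i<n. ?c i *\<^sub>R v i x) + \<alpha> *\<^sub>R v n x"
        by simp
      show ?thesis unfolding A B by (simp add: r_def algebra_simps)
    qed
    have eq: "(\<lambda>x. w x - (\<Sum>i<Suc n. ?c i *\<^sub>R v i x)) = (\<lambda>x. e x - \<alpha> *\<^sub>R r x)"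
      unfolding s by (rule ext) (simp add: e_def algebra_simps)
    have e'L: "(\<lambda>x. e x - \<alpha> *\<^sub>R r x) \<in> L2 S" using eL rL by (intro L2_diff L2_scale)
    have o1: "L2_inner S (\<lambda>x. e x - \<alpha> *\<^sub>R r x) (v j) = 0" if "j < n" for j
      using that vL eL rL e_orth r_orth
      by (simp add: L2_inner_diff_left L2_scale L2_inner_scale_left)
    have "L2_inner S (\<lambda>x. e x - \<alpha> *\<^sub>R r x) (v n) = 0"
    proof -
      have "L2_inner S (\<lambda>x. e x - \<alpha> *\<^sub>R r x) (v n)
          = L2_inner S (\<lambda>x. e x - \<alpha> *\<^sub>R r x) r + L2_inner S (\<lambda>x. e x - \<alpha> *\<^sub>R r x) q"
        unfolding vn by (rule L2_inner_add_right) (use rL qL e'L in auto)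
      also have "L2_inner S (\<lambda>x. e x - \<alpha> *\<^sub>R r x) q = 0" by (rule orth_q[OF e'L o1])
      also have "L2_inner S (\<lambda>x. e x - \<alpha> *\<^sub>R r x) r = L2_inner S e r - \<alpha> * L2_inner S r r"
        using eL rL by (simp add: L2_inner_diff_left L2_scale L2_inner_scale_left)
      also have "\<dots> = 0" using False by (simp add: \<alpha>_def)
      finally show ?thesis by simp
    qed
    then have fin: "\<forall>j<Suc n. L2_inner S (\<lambda>x. e x - \<alpha> *\<^sub>R r x) (v j) = 0"
      using o1 less_SucE by blast
    have "\<forall>j<Suc n. L2_inner S (\<lambda>x. w x - (\<Sum>i<Suc n. ?c i *\<^sub>R v i x)) (v j) = 0"
      unfolding eq by (rule fin)
    then show ?thesis by (intro exI[where x="\<lambda>i. if i < n then c i - \<alpha> * d i else \<alpha>"])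
  qed
qed

lemma nontriv_sol:
  fixes M :: "nat \<Rightarrow> nat \<Rightarrow> real"
  assumes "finite K" "n < card K"
  shows "\<exists>c. (\<exists>k\<in>K. c k \<noteq> 0) \<and> (\<forall>j<n. (\<Sum>k\<in>K. M j k * c k) = 0)"
  using assms
proof (induction n arbitrary: K M)
  case 0
  then obtain k0 where "k0 \<in> K" by fastforce
  then show ?case by (intro exI[of _ "\<lambda>k. if k = k0 then 1 else 0"]) auto
next
  case (Suc n)
  show ?case
  proof (cases "\<forall>k\<in>K. M n k = 0")
    case True
    from Suc.IH[of K M] Suc.prems obtain c where
      c: "(\<exists>k\<in>K. c k \<noteq> 0)" "\<forall>j<n. (\<Sum>k\<in>K. M j k * c k) = 0" by auto
    then show ?thesis using True by (intro exI[of _ c]) (auto simp: less_Suc_eq)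
  next
    case False
    then obtain k0 where k0: "k0 \<in> K" "M n k0 \<noteq> 0" by auto
    define K' where "K' = K - {k0}"
    define M' where "M' = (\<lambda>j k. M j k - M j k0 * M n k / M n k0)"
    have fK': "finite K'" using Suc.prems by (simp add: K'_def)
    have cK': "n < card K'" using Suc.prems k0 by (simp add: K'_def)
    from Suc.IH[OF fK' cK', of M'] obtain c' where
      c': "\<exists>k\<in>K'. c' k \<noteq> 0" "\<forall>j<n. (\<Sum>k\<in>K'. M' j k * c' k) = 0" by auto
    define c where "c = c'(k0 := - (\<Sum>k\<in>K'. M n k * c' k) / M n k0)"
    have split: "(\<Sum>k\<in>K. M j k * c k) = M j k0 * c k0 + (\<Sum>k\<in>K'. M j k * c' k)" for j
    proof -
      have "(\<Sum>k\<in>K. M j k * c k) = M j k0 * c k0 + (\<Sum>k\<in>K'. M j k * c k)"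
        unfolding K'_def using Suc.prems k0 by (simp add: sum.remove)
      also have "(\<Sum>k\<in>K'. M j k * c k) = (\<Sum>k\<in>K'. M j k * c' k)"
        by (rule sum.cong) (auto simp: c_def K'_def)
      finally show ?thesis .
    qed
    have ck0: "M j k0 * c k0 = - (M j k0 / M n k0) * (\<Sum>k\<in>K'. M n k * c' k)" for j
      using k0 by (simp add: c_def)
    have nz: "\<exists>k\<in>K. c k \<noteq> 0" using c' by (auto simp: c_def K'_def)
    have "(\<Sum>k\<in>K. M j k * c k) = 0" if "j < Suc n" for j
    proof (cases "j < n")
      case True
      have "0 = (\<Sum>k\<in>K'. M' j k * c' k)" using c' True by auto
      also have "\<dots> = (\<Sum>k\<in>K'. M j k * c' k) - (M j k0 / M n k0) * (\<Sum>k\<in>K'. M n k * c' k)"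
        by (simp add: M'_def sum_subtractf sum_distrib_left algebra_simps)
      finally have "0 = (\<Sum>k\<in>K'. M j k * c' k) - (M j k0 / M n k0) * (\<Sum>k\<in>K'. M n k * c' k)" .
      then have h: "(\<Sum>k\<in>K'. M j k * c' k) = (M j k0 / M n k0) * (\<Sum>k\<in>K'. M n k * c' k)"
        by linarith
      show ?thesis unfolding split[of j] ck0[of j] using h by linarith
    next
      case False
      then have "j = n" using that by simp
      then show ?thesis using split[of j] ck0[of j] k0 by simp
    qed
    then show ?thesis using nz by blast
  qed
qed

lemma fspan_L2:
  assumes "\<forall>i<n. v i \<in> L2 S" "x \<in> fspan n v"
  shows "x \<in> L2 S"
  using assms unfolding fspan_def by (auto intro!: L2_sum)

lemma proj_prop:
  fixes v :: "nat \<Rightarrow> real \<Rightarrow> 'a::euclidean_space"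
  assumes vL: "\<forall>i<n. v i \<in> L2 S" and wL: "w \<in> L2 S"
  shows "L2_proj S (fspan n v) w \<in> fspan n v \<and>
         (\<forall>x\<in>fspan n v. L2_inner S (\<lambda>s. w s - L2_proj S (fspan n v) w s) x = 0)"
proof -
  obtain c where c: "\<forall>j<n. L2_inner S (\<lambda>x. w x - (\<Sum>i<n. c i *\<^sub>R v i x)) (v j) = 0"
    using proj_exists[OF vL wL] by blast
  define p0 where "p0 = (\<lambda>x. \<Sum>i<n. c i *\<^sub>R v i x)"
  have p0V: "p0 \<in> fspan n v" unfolding p0_def fspan_def by blast
  have p0L: "p0 \<in> L2 S" using fspan_L2[OF vL p0V] .
  have rL: "(\<lambda>s. w s - p0 s) \<in> L2 S" using wL p0L by (rule L2_diff)
  have "\<forall>x\<in>fspan n v. L2_inner S (\<lambda>s. w s - p0 s) x = 0"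
  proof
    fix x assume "x \<in> fspan n v"
    then obtain e where x: "x = (\<lambda>s. \<Sum>i<n. e i *\<^sub>R v i s)" unfolding fspan_def by blast
    have "L2_inner S (\<lambda>s. w s - p0 s) x = (\<Sum>i<n. e i * L2_inner S (\<lambda>s. w s - p0 s) (v i))"
      unfolding x by (rule L2_inner_sum_right) (use vL rL in auto)
    also have "\<dots> = 0" using c by (simp add: p0_def)
    finally show "L2_inner S (\<lambda>s. w s - p0 s) x = 0" .
  qed
  then have "\<exists>p. p \<in> fspan n v \<and> (\<forall>x\<in>fspan n v. L2_inner S (\<lambda>s. w s - p s) x = 0)"
    using p0V by blast
  then show ?thesis unfolding L2_proj_def by (rule someI_ex)
qed

lemma on_coeff:
  assumes fL: "\<And>i. i \<in> I \<Longrightarrow> f i \<in> L2 S"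
    and fon: "\<And>i j. i \<in> I \<Longrightarrow> j \<in> I \<Longrightarrow> L2_inner S (f i) (f j) = (if i = j then 1 else 0)"
    and J: "finite J" "J \<subseteq> I" and k: "k \<in> I"
  shows "L2_inner S (\<lambda>x. \<Sum>i\<in>J. a i *\<^sub>R f i x) (f k) = (if k \<in> J then a k else 0)"
proof -
  have "L2_inner S (\<lambda>x. \<Sum>i\<in>J. a i *\<^sub>R f i x) (f k) = (\<Sum>i\<in>J. a i * L2_inner S (f i) (f k))"
    by (rule L2_inner_sum_left) (use fL J k in auto)
  also have "\<dots> = (\<Sum>i\<in>J. if i = k then a i else 0)"
    by (rule sum.cong) (use fon J k in auto)
  also have "\<dots> = (if k \<in> J then a k else 0)" using J by (simp add: sum.delta')
  finally show ?thesis .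
qed

lemma on_norm:
  assumes fL: "\<And>i. i \<in> I \<Longrightarrow> f i \<in> L2 S"
    and fon: "\<And>i j. i \<in> I \<Longrightarrow> j \<in> I \<Longrightarrow> L2_inner S (f i) (f j) = (if i = j then 1 else 0)"
    and J: "finite J" "J \<subseteq> I"
  shows "L2_inner S (\<lambda>x. \<Sum>i\<in>J. a i *\<^sub>R f i x) (\<lambda>x. \<Sum>i\<in>J. b i *\<^sub>R f i x) = (\<Sum>i\<in>J. a i * b i)"
proof -
  have aL: "(\<lambda>x. \<Sum>i\<in>J. a i *\<^sub>R f i x) \<in> L2 S" by (rule L2_sum) (use fL J in auto)
  have "L2_inner S (\<lambda>x. \<Sum>i\<in>J. a i *\<^sub>R f i x) (\<lambda>x. \<Sum>i\<in>J. b i *\<^sub>R f i x)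
      = (\<Sum>k\<in>J. b k * L2_inner S (\<lambda>x. \<Sum>i\<in>J. a i *\<^sub>R f i x) (f k))"
    by (rule L2_inner_sum_right) (use fL J aL in auto)
  also have "\<dots> = (\<Sum>k\<in>J. a k * b k)"
    by (rule sum.cong) (use on_coeff[OF fL fon J] J in auto)
  finally show ?thesis .
qed

lemma bessel:
  assumes fL: "\<And>i. i \<in> I \<Longrightarrow> f i \<in> L2 S"
    and fon: "\<And>i j. i \<in> I \<Longrightarrow> j \<in> I \<Longrightarrow> L2_inner S (f i) (f j) = (if i = j then 1 else 0)"
    and J: "finite J" "J \<subseteq> I" and uL: "u \<in> L2 S"
  shows "(\<Sum>i\<in>J. (L2_inner S u (f i))\<^sup>2) \<le> L2_inner S u u"
proof -
  define c where "c i = L2_inner S u (f i)" for i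
  define P where "P = (\<lambda>x. \<Sum>i\<in>J. c i *\<^sub>R f i x)"
  have PL: "P \<in> L2 S" unfolding P_def by (rule L2_sum) (use fL J in auto)
  have rL: "(\<lambda>x. u x - P x) \<in> L2 S" using uL PL by (rule L2_diff)
  have PP: "L2_inner S P P = (\<Sum>i\<in>J. (c i)\<^sup>2)"
    unfolding P_def by (subst on_norm[OF fL fon J]) (simp_all add: power2_eq_square)
  have Pu: "L2_inner S P u = (\<Sum>i\<in>J. (c i)\<^sup>2)"
  proof -
    have "L2_inner S P u = (\<Sum>i\<in>J. c i * L2_inner S (f i) u)"
      unfolding P_def by (rule L2_inner_sum_left) (use fL J uL in auto)
    also have "\<dots> = (\<Sum>i\<in>J. (c i)\<^sup>2)"
      by (rule sum.cong) (simp_all add: c_def L2_inner_commute power2_eq_square)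
    finally show ?thesis .
  qed
  have uP: "L2_inner S u P = (\<Sum>i\<in>J. (c i)\<^sup>2)" using Pu L2_inner_commute by metis
  have "0 \<le> L2_inner S (\<lambda>x. u x - P x) (\<lambda>x. u x - P x)" by (rule L2_inner_nonneg)
  also have "\<dots> = L2_inner S u (\<lambda>x. u x - P x) - L2_inner S P (\<lambda>x. u x - P x)"
    by (rule L2_inner_diff_left) (use uL PL rL in auto)
  also have "\<dots> = (L2_inner S u u - L2_inner S u P) - (L2_inner S P u - L2_inner S P P)"
    using uL PL by (simp add: L2_inner_diff_right)
  also have "\<dots> = L2_inner S u u - (\<Sum>i\<in>J. (c i)\<^sup>2)" using PP Pu uP by simp
  finally show ?thesis by (simp add: c_def)
qed


lemma matrix_mul_scaleR_right: "(A::real^'n^'m) ** (c *\<^sub>R B) = c *\<^sub>R (A ** (B::real^'k^'n))"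
  by (simp add: matrix_matrix_mult_def vec_eq_iff sum_distrib_left algebra_simps)

lemma matpow_scale: "matpow (c *\<^sub>R A) k = c ^ k *\<^sub>R matpow A k"
proof (induction k)
  case 0 then show ?case by simp
next
  case (Suc k)
  have "matpow (c *\<^sub>R A) (Suc k) = (c *\<^sub>R A) ** (c ^ k *\<^sub>R matpow A k)" using Suc by simp
  also have "\<dots> = c ^ Suc k *\<^sub>R (A ** matpow A k)"
    by (simp add: matrix_mul_scaleR_right scalar_matrix_assoc[symmetric])
  finally show ?case by simp
qed

lemma mat_exp_scale: "mat_exp (t *\<^sub>R A) = (\<Sum>k. (t ^ k / fact k) *\<^sub>R matpow A k)"
  unfolding mat_exp_def matpow_scale by simp

lemma meas_vec_nth [measurable (raw)]:
  fixes f :: "'b \<Rightarrow> 'a::euclidean_space ^ 'n"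
  assumes "f \<in> borel_measurable M"
  shows "(\<lambda>x. f x $ i) \<in> borel_measurable M"
proof -
  have "(\<lambda>x. f x \<bullet> axis i b) \<in> borel_measurable M" for b
    using assms by measurable
  then show ?thesis
    by (subst borel_measurable_euclidean_space) (simp add: inner_axis)
qed

lemma meas_vec_lambda:
  fixes h :: "'n::finite \<Rightarrow> 'b \<Rightarrow> real"
  assumes "\<And>i. h i \<in> borel_measurable M"
  shows "(\<lambda>x. \<chi> i. h i x) \<in> borel_measurable M"
proof (subst borel_measurable_euclidean_space, intro ballI)
  fix b :: "real^'n" assume "b \<in> Basis"
  then obtain i u where b: "b = axis i u" "u \<in> (Basis :: real set)" by (auto simp: Basis_vec_def)
  have "(\<lambda>x. h i x * u) \<in> borel_measurable M" using assms by measurable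
  then show "(\<lambda>x. (\<chi> i. h i x) \<bullet> b) \<in> borel_measurable M"
    using b by (simp add: inner_axis)
qed

lemma meas_mv [measurable (raw)]:
  fixes Mf :: "'b \<Rightarrow> real^'n^'m" and v :: "'b \<Rightarrow> real^'n"
  assumes "Mf \<in> borel_measurable M" "v \<in> borel_measurable M"
  shows "(\<lambda>x. Mf x *v v x) \<in> borel_measurable M"
  unfolding matrix_vector_mult_def
  by (rule meas_vec_lambda) (use assms in measurable)

lemma meas_mat_exp [measurable (raw)]:
  fixes A :: "real^'n^'n"
  assumes "g \<in> borel_measurable M"
  shows "(\<lambda>x. mat_exp (g x *\<^sub>R A)) \<in> borel_measurable M"
  unfolding mat_exp_scale by (use assms in measurable)

lemma hankel_meas:
  assumes u: "set_borel_measurable lborel {..0} u"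
  shows "hankel A B C u \<in> borel_measurable lborel"
proof -
  define U where "U = (\<lambda>s. indicator {..0::real} s *\<^sub>R u s)"
  have U[measurable]: "U \<in> borel_measurable lborel" using u unfolding U_def set_borel_measurable_def .
  have eq: "hankel A B C u = (\<lambda>t. \<integral>s. C *v (mat_exp ((t - s) *\<^sub>R A) *v (B *v U s)) \<partial>lborel)"
    unfolding hankel_def set_lebesgue_integral_def U_def
    by (simp add: matrix_vector_mult_scaleR)
  have "(\<lambda>(t, s). C *v (mat_exp ((t - s) *\<^sub>R A) *v (B *v U s))) \<in> borel_measurable (lborel \<Otimes>\<^sub>M lborel)"
    by measurable
  then show ?thesis unfolding eq
    by (rule lborel.borel_measurable_lebesgue_integral[where f="\<lambda>t s. C *v (mat_exp ((t - s) *\<^sub>R A) *v (B *v U s))"])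
qed


lemma main_abstract:
  fixes Op :: "(real \<Rightarrow> 'a::euclidean_space) \<Rightarrow> real \<Rightarrow> 'b::euclidean_space"
    and f :: "nat \<Rightarrow> real \<Rightarrow> 'a" and g :: "nat \<Rightarrow> real \<Rightarrow> 'b" and \<sigma> :: "nat \<Rightarrow> real"
    and N n :: nat
  assumes Tm: "T \<in> sets lborel"
    and fL: "\<And>i. i < N \<Longrightarrow> f i \<in> L2 S"
    and gL: "\<And>i. i < N \<Longrightarrow> g i \<in> L2 T"
    and fon: "\<And>i j. i < N \<Longrightarrow> j < N \<Longrightarrow> L2_inner S (f i) (f j) = (if i = j then 1 else 0)"
    and gon: "\<And>i j. i < N \<Longrightarrow> j < N \<Longrightarrow> L2_inner T (g i) (g j) = (if i = j then 1 else 0)"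
    and smono: "\<And>i j. i \<le> j \<Longrightarrow> j < N \<Longrightarrow> \<sigma> j \<le> \<sigma> i"
    and snn: "\<And>i. i < N \<Longrightarrow> 0 \<le> \<sigma> i"
    and svd: "\<And>u. u \<in> L2 S \<Longrightarrow>
       AE t in lborel. t \<in> T \<longrightarrow> Op u t = (\<Sum>i<N. (\<sigma> i * L2_inner S u (f i)) *\<^sub>R g i t)"
    and meas: "\<And>u. u \<in> L2 S \<Longrightarrow> Op u \<in> borel_measurable lborel"
    and n: "n \<le> N"
  shows "active_subspace S T Op {w \<in> L2 S. L2_norm S w \<le> 1} n (fspan n f)
       \<and> worst_err S T Op {w \<in> L2 S. L2_norm S w \<le> 1} (fspan n f)
         = optimal_err S T Op {w \<in> L2 S. L2_norm S w \<le> 1} n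
       \<and> optimal_err S T Op {w \<in> L2 S. L2_norm S w \<le> 1} n = (if n < N then \<sigma> n else 0)"
proof -
  define W :: "(real \<Rightarrow> 'a) set" where "W = {w \<in> L2 S. L2_norm S w \<le> 1}"
  define tgt where "tgt = (if n < N then \<sigma> n else 0)"
  define err where "err V w = L2_norm T (\<lambda>t. Op w t - Op (L2_proj S V w) t)" for V w
  have we: "worst_err S T Op W V = (SUP w\<in>W. err V w)" for V
    unfolding worst_err_def err_def ..
  have fL': "\<And>i. i \<in> {..<N} \<Longrightarrow> f i \<in> L2 S" using fL by auto
  have gL': "\<And>i. i \<in> {..<N} \<Longrightarrow> g i \<in> L2 T" using gL by auto
  have fon': "\<And>i j. i \<in> {..<N} \<Longrightarrow> j \<in> {..<N} \<Longrightarrow> L2_inner S (f i) (f j) = (if i = j then 1 else 0)"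
    using fon by auto
  have gon': "\<And>i j. i \<in> {..<N} \<Longrightarrow> j \<in> {..<N} \<Longrightarrow> L2_inner T (g i) (g j) = (if i = j then 1 else 0)"
    using gon by auto
  have tgt_nn: "0 \<le> tgt" unfolding tgt_def using snn by auto
  have W0: "(\<lambda>x. 0) \<in> W" unfolding W_def L2_norm_def L2_inner_def by (simp add: L2_zero)
  have Wn: "L2_inner S w w \<le> 1" if "w \<in> W" for w
    using that unfolding W_def L2_norm_def by auto
  have WL: "w \<in> L2 S" if "w \<in> W" for w using that unfolding W_def by auto
  have norm_nn: "0 \<le> L2_norm T h" for h unfolding L2_norm_def by (simp add: L2_inner_nonneg)

  have errf: "L2_norm T (\<lambda>t. Op w t - Op p t)
      = sqrt (\<Sum>i<N. (\<sigma> i * (L2_inner S w (f i) - L2_inner S p (f i)))\<^sup>2)"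
    if wL: "w \<in> L2 S" and pL: "p \<in> L2 S" for w p
  proof -
    define d where "d i = \<sigma> i * (L2_inner S w (f i) - L2_inner S p (f i))" for i
    define G where "G = (\<lambda>t. \<Sum>i<N. d i *\<^sub>R g i t)"
    have GL: "G \<in> L2 T" unfolding G_def by (rule L2_sum) (use gL in auto)
    have ae: "AE t in lborel. t \<in> T \<longrightarrow> Op w t - Op p t = G t"
      using svd[OF wL] svd[OF pL]
    proof eventually_elim
      case (elim t)
      show ?case
      proof
        assume "t \<in> T"
        then have "Op w t - Op p t = (\<Sum>i<N. (\<sigma> i * L2_inner S w (f i)) *\<^sub>R g i t)
            - (\<Sum>i<N. (\<sigma> i * L2_inner S p (f i)) *\<^sub>R g i t)" using elim by simp
        also have "\<dots> = G t"
          unfolding G_def d_def sum_subtractf[symmetric]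
          by (rule sum.cong) (simp_all add: right_diff_distrib scaleR_diff_left)
        finally show "Op w t - Op p t = G t" .
      qed
    qed
    note Tm[measurable] meas[OF wL, measurable] meas[OF pL, measurable]
    have m1: "(\<lambda>t. indicator T t *\<^sub>R inner (Op w t - Op p t) (Op w t - Op p t)) \<in> borel_measurable lborel"
      by measurable
    have m2: "(\<lambda>t. indicator T t *\<^sub>R inner (G t) (G t)) \<in> borel_measurable lborel"
      using L2_inner_integrable[OF GL GL] unfolding set_integrable_def by (rule borel_measurable_integrable)
    have "L2_inner T (\<lambda>t. Op w t - Op p t) (\<lambda>t. Op w t - Op p t) = L2_inner T G G"
      unfolding L2_inner_def set_lebesgue_integral_def
      by (rule integral_cong_AE[OF m1 m2]) (use ae in \<open>eventually_elim, auto simp: indicator_def\<close>)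
    also have "L2_inner T G G = (\<Sum>i<N. d i * d i)"
      unfolding G_def using on_norm[where I="{..<N}", OF gL' gon', where J="{..<N}" and a=d and b=d] by simp
    finally show ?thesis unfolding L2_norm_def d_def by (simp add: power2_eq_square)
  qed

  have rr_le: "L2_inner S (\<lambda>s. w s - L2_proj S (fspan n v) w s) (\<lambda>s. w s - L2_proj S (fspan n v) w s)
      \<le> L2_inner S w w"
    if vL: "\<forall>i<n. v i \<in> L2 S" and wL: "w \<in> L2 S" for v w
  proof -
    define p where "p = L2_proj S (fspan n v) w"
    have pV: "p \<in> fspan n v" and orth: "\<forall>x\<in>fspan n v. L2_inner S (\<lambda>s. w s - p s) x = 0"
      using proj_prop[OF vL wL] unfolding p_def by auto
    have pL: "p \<in> L2 S" using fspan_L2[OF vL pV] .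
    have rL: "(\<lambda>s. w s - p s) \<in> L2 S" using wL pL by (rule L2_diff)
    have rp: "L2_inner S (\<lambda>s. w s - p s) p = 0" using orth pV by auto
    then have wp: "L2_inner S w p = L2_inner S p p" using wL pL by (simp add: L2_inner_diff_left)
    have "L2_inner S (\<lambda>s. w s - p s) (\<lambda>s. w s - p s)
        = L2_inner S w (\<lambda>s. w s - p s) - L2_inner S p (\<lambda>s. w s - p s)"
      by (rule L2_inner_diff_left) (use wL pL rL in auto)
    also have "L2_inner S p (\<lambda>s. w s - p s) = 0" using rp L2_inner_commute by metis
    also have "L2_inner S w (\<lambda>s. w s - p s) = L2_inner S w w - L2_inner S w p"
      by (rule L2_inner_diff_right) (use wL pL in auto)
    finally have "L2_inner S (\<lambda>s. w s - p s) (\<lambda>s. w s - p s) = L2_inner S w w - L2_inner S p p"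
      using wp by simp
    then show ?thesis using L2_inner_nonneg[of S p] unfolding p_def by simp
  qed

  define K where "K = sqrt (\<Sum>i<N. (\<sigma> i)\<^sup>2)"
  have bound: "err (fspan n v) w \<le> K" if vL: "\<forall>i<n. v i \<in> L2 S" and wW: "w \<in> W" for v w
  proof -
    have wL: "w \<in> L2 S" using WL[OF wW] .
    define p where "p = L2_proj S (fspan n v) w"
    have pV: "p \<in> fspan n v" using proj_prop[OF vL wL] unfolding p_def by auto
    have pL: "p \<in> L2 S" using fspan_L2[OF vL pV] .
    have rL: "(\<lambda>s. w s - p s) \<in> L2 S" using wL pL by (rule L2_diff)
    have rr: "L2_inner S (\<lambda>s. w s - p s) (\<lambda>s. w s - p s) \<le> 1"
      using rr_le[OF vL wL] Wn[OF wW] unfolding p_def by simp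
    have "(\<sigma> i * (L2_inner S w (f i) - L2_inner S p (f i)))\<^sup>2 \<le> (\<sigma> i)\<^sup>2" if i: "i \<in> {..<N}" for i
    proof -
      have "L2_inner S w (f i) - L2_inner S p (f i) = L2_inner S (\<lambda>s. w s - p s) (f i)"
        using wL pL fL' i by (simp add: L2_inner_diff_left)
      moreover have "(\<Sum>j\<in>{i}. (L2_inner S (\<lambda>s. w s - p s) (f j))\<^sup>2) \<le> L2_inner S (\<lambda>s. w s - p s) (\<lambda>s. w s - p s)"
        by (rule bessel[where I="{..<N}", OF fL' fon' _ _ rL]) (use i in auto)
      ultimately have "(L2_inner S w (f i) - L2_inner S p (f i))\<^sup>2 \<le> 1" using rr by simp
      then have "(\<sigma> i)\<^sup>2 * (L2_inner S w (f i) - L2_inner S p (f i))\<^sup>2 \<le> (\<sigma> i)\<^sup>2 * 1"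
        by (intro mult_left_mono) auto
      then show ?thesis by (simp add: power_mult_distrib)
    qed
    then have "(\<Sum>i<N. (\<sigma> i * (L2_inner S w (f i) - L2_inner S p (f i)))\<^sup>2) \<le> (\<Sum>i<N. (\<sigma> i)\<^sup>2)"
      by (intro sum_mono) auto
    then show ?thesis unfolding err_def p_def[symmetric] errf[OF wL pL] K_def by simp
  qed
  have bdd: "bdd_above (err (fspan n v) ` W)" if vL: "\<forall>i<n. v i \<in> L2 S" for v
    using bound[OF vL] by (intro bdd_aboveI2) auto

  have lower: "tgt \<le> worst_err S T Op W (fspan n v)" if vL: "\<forall>i<n. v i \<in> L2 S" for v
  proof (cases "n < N")
    case False
    then have "tgt = 0" unfolding tgt_def by simp
    also have "0 \<le> err (fspan n v) (\<lambda>x. 0)" unfolding err_def by (rule norm_nn)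
    also have "\<dots> \<le> worst_err S T Op W (fspan n v)"
      unfolding we by (rule cSUP_upper[OF W0 bdd[OF vL]])
    finally show ?thesis .
  next
    case True
    then have tgtn: "tgt = \<sigma> n" unfolding tgt_def by simp
    define Kset where "Kset = {..<Suc n}"
    have fK: "finite Kset" and cK: "n < card Kset" and KN: "Kset \<subseteq> {..<N}"
      unfolding Kset_def using True by auto
    define M where "M j k = L2_inner S (f k) (v j)" for j k
    obtain c where cnz: "\<exists>k\<in>Kset. c k \<noteq> 0" and csol: "\<forall>j<n. (\<Sum>k\<in>Kset. M j k * c k) = 0"
      using nontriv_sol[OF fK cK, of M] by blast
    define s where "s = (\<Sum>k\<in>Kset. (c k)\<^sup>2)"
    have spos: "0 < s"
    proof -
      obtain k0 where k0: "k0 \<in> Kset" "c k0 \<noteq> 0" using cnz by blast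
      have "(c k0)\<^sup>2 \<le> s" unfolding s_def by (rule member_le_sum) (use k0 fK in auto)
      moreover have "0 < (c k0)\<^sup>2" using k0 by simp
      ultimately show ?thesis by linarith
    qed
    define a where "a k = c k / sqrt s" for k
    define w where "w = (\<lambda>x. \<Sum>k\<in>Kset. a k *\<^sub>R f k x)"
    have wL: "w \<in> L2 S" unfolding w_def by (rule L2_sum) (use fK KN fL in auto)
    have ww: "L2_inner S w w = 1"
    proof -
      have "L2_inner S w w = (\<Sum>k\<in>Kset. a k * a k)"
        unfolding w_def by (rule on_norm[where I="{..<N}", OF fL' fon' fK KN])
      also have "\<dots> = (\<Sum>k\<in>Kset. (c k)\<^sup>2) / s"
        using spos by (simp add: a_def sum_divide_distrib power2_eq_square)
      also have "\<dots> = 1" using spos by (simp add: s_def)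
      finally show ?thesis .
    qed
    have wW: "w \<in> W" unfolding W_def L2_norm_def using wL ww by simp
    have wv: "L2_inner S w (v j) = 0" if j: "j < n" for j
    proof -
      have "L2_inner S w (v j) = (\<Sum>k\<in>Kset. a k * L2_inner S (f k) (v j))"
        unfolding w_def by (rule L2_inner_sum_left) (use fK KN fL vL j in auto)
      also have "\<dots> = (\<Sum>k\<in>Kset. M j k * c k) / sqrt s"
        by (simp add: a_def M_def sum_divide_distrib algebra_simps)
      also have "\<dots> = 0" using csol j by simp
      finally show ?thesis .
    qed
    have wV: "L2_inner S w x = 0" if "x \<in> fspan n v" for x
    proof -
      obtain e where x: "x = (\<lambda>s. \<Sum>i<n. e i *\<^sub>R v i s)" using \<open>x \<in> fspan n v\<close> unfolding fspan_def by blast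
      have "L2_inner S w x = (\<Sum>i<n. e i * L2_inner S w (v i))"
        unfolding x by (rule L2_inner_sum_right) (use vL wL in auto)
      also have "\<dots> = 0" using wv by simp
      finally show ?thesis .
    qed
    define p where "p = L2_proj S (fspan n v) w"
    have pV: "p \<in> fspan n v" and orth: "\<forall>x\<in>fspan n v. L2_inner S (\<lambda>s. w s - p s) x = 0"
      using proj_prop[OF vL wL] unfolding p_def by auto
    have pL: "p \<in> L2 S" using fspan_L2[OF vL pV] .
    have "L2_inner S (\<lambda>s. w s - p s) p = 0" using orth pV by auto
    then have "L2_inner S w p - L2_inner S p p = 0" using wL pL by (simp add: L2_inner_diff_left)
    then have pp: "L2_inner S p p = 0" using wV[OF pV] by simp
    have pf: "L2_inner S p (f k) = 0" if "k < N" for k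
      using L2_null_orth[OF fL[OF that] pL pp] L2_inner_commute by metis
    have wf: "L2_inner S w (f k) = a k" if "k \<in> Kset" for k
      unfolding w_def using on_coeff[where I="{..<N}", OF fL' fon' fK KN, of k a] that KN by auto
    have "(\<Sum>k\<in>Kset. (\<sigma> n)\<^sup>2 * (a k)\<^sup>2) \<le> (\<Sum>k\<in>Kset. (\<sigma> k * a k)\<^sup>2)"
    proof (rule sum_mono)
      fix k assume k: "k \<in> Kset"
      then have "k \<le> n" unfolding Kset_def by auto
      then have "\<sigma> n \<le> \<sigma> k" using smono True by auto
      moreover have "0 \<le> \<sigma> n" using snn True by auto
      ultimately have "(\<sigma> n)\<^sup>2 \<le> (\<sigma> k)\<^sup>2" by (intro power_mono) auto
      then show "(\<sigma> n)\<^sup>2 * (a k)\<^sup>2 \<le> (\<sigma> k * a k)\<^sup>2"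
        by (simp add: power_mult_distrib mult_right_mono)
    qed
    also have "\<dots> = (\<Sum>k\<in>Kset. (\<sigma> k * (L2_inner S w (f k) - L2_inner S p (f k)))\<^sup>2)"
      by (rule sum.cong) (use wf pf KN in auto)
    also have "\<dots> \<le> (\<Sum>k<N. (\<sigma> k * (L2_inner S w (f k) - L2_inner S p (f k)))\<^sup>2)"
      by (rule sum_mono2) (use KN in auto)
    finally have "(\<sigma> n)\<^sup>2 * (\<Sum>k\<in>Kset. (a k)\<^sup>2) \<le> (\<Sum>k<N. (\<sigma> k * (L2_inner S w (f k) - L2_inner S p (f k)))\<^sup>2)"
      by (simp add: sum_distrib_left)
    moreover have "(\<Sum>k\<in>Kset. (a k)\<^sup>2) = 1" using ww on_norm[where I="{..<N}", OF fL' fon' fK KN, of a a]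
      unfolding w_def by (simp add: power2_eq_square)
    ultimately have "(\<sigma> n)\<^sup>2 \<le> (\<Sum>k<N. (\<sigma> k * (L2_inner S w (f k) - L2_inner S p (f k)))\<^sup>2)"
      by simp
    then have "sqrt ((\<sigma> n)\<^sup>2) \<le> sqrt (\<Sum>k<N. (\<sigma> k * (L2_inner S w (f k) - L2_inner S p (f k)))\<^sup>2)"
      by (rule real_sqrt_le_mono)
    then have "sqrt ((\<sigma> n)\<^sup>2) \<le> err (fspan n v) w"
      unfolding err_def p_def[symmetric] errf[OF wL pL] .
    then have "tgt \<le> err (fspan n v) w" using tgtn tgt_nn by simp
    also have "\<dots> \<le> worst_err S T Op W (fspan n v)"
      unfolding we by (rule cSUP_upper[OF wW bdd[OF vL]])
    finally show ?thesis .
  qed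

  have fLn: "\<forall>i<n. f i \<in> L2 S" using fL n by auto
  have upper: "err (fspan n f) w \<le> tgt" if wW: "w \<in> W" for w
  proof -
    have wL: "w \<in> L2 S" using WL[OF wW] .
    define p where "p = L2_proj S (fspan n f) w"
    have pV: "p \<in> fspan n f" and orth: "\<forall>x\<in>fspan n f. L2_inner S (\<lambda>s. w s - p s) x = 0"
      using proj_prop[OF fLn wL] unfolding p_def by auto
    have pL: "p \<in> L2 S" using fspan_L2[OF fLn pV] .
    obtain c where pc: "p = (\<lambda>x. \<Sum>i<n. c i *\<^sub>R f i x)" using pV unfolding fspan_def by blast
    have nN: "{..<n} \<subseteq> {..<N}" using n by auto
    have pf: "L2_inner S p (f k) = (if k < n then c k else 0)" if "k < N" for k
      unfolding pc using on_coeff[where I="{..<N}", OF fL' fon' _ nN, of k c] that by simp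
    have fkV: "f k \<in> fspan n f" if "k < n" for k
    proof -
      have eq: "f k = (\<lambda>x. \<Sum>i<n. (if i = k then 1 else 0) *\<^sub>R f i x)"
      proof
        fix x
        have "(\<Sum>i<n. (if i = k then 1 else 0) *\<^sub>R f i x) = (\<Sum>i<n. if i = k then f i x else 0)"
          by (rule sum.cong) auto
        also have "\<dots> = f k x" using that by (simp add: sum.delta)
        finally show "f k x = (\<Sum>i<n. (if i = k then 1 else 0) *\<^sub>R f i x)" by simp
      qed
      show ?thesis unfolding fspan_def
      proof (intro CollectI exI[where x="\<lambda>i. if i = k then (1::real) else 0"] conjI)
        show "f k = (\<lambda>x. \<Sum>i<n. (if i = k then 1 else 0) *\<^sub>R f i x)" by (rule eq)
      qed simp
    qed
    have dk: "L2_inner S w (f k) - L2_inner S p (f k) = (if k < n then 0 else L2_inner S w (f k))"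
      if k: "k < N" for k
    proof (cases "k < n")
      case True
      have "L2_inner S (\<lambda>s. w s - p s) (f k) = 0" using orth fkV[OF True] by auto
      then show ?thesis using wL pL fL[OF k] True by (simp add: L2_inner_diff_left)
    next
      case False
      then show ?thesis using pf[OF k] by simp
    qed
    have "(\<Sum>k<N. (\<sigma> k * (L2_inner S w (f k) - L2_inner S p (f k)))\<^sup>2)
        \<le> (\<Sum>k<N. tgt\<^sup>2 * (L2_inner S w (f k))\<^sup>2)"
    proof (rule sum_mono)
      fix k assume "k \<in> {..<N}"
      then have k: "k < N" by simp
      show "(\<sigma> k * (L2_inner S w (f k) - L2_inner S p (f k)))\<^sup>2 \<le> tgt\<^sup>2 * (L2_inner S w (f k))\<^sup>2"
      proof (cases "k < n")
        case True then show ?thesis using dk[OF k] by simp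
      next
        case False
        then have nN': "n < N" and "n \<le> k" using k by auto
        then have "\<sigma> k \<le> \<sigma> n" using smono k by auto
        moreover have "0 \<le> \<sigma> k" using snn k by auto
        ultimately have "(\<sigma> k)\<^sup>2 \<le> tgt\<^sup>2" unfolding tgt_def using nN' by (intro power_mono) auto
        then show ?thesis using dk[OF k] False
          by (simp add: power_mult_distrib mult_right_mono)
      qed
    qed
    also have "\<dots> = tgt\<^sup>2 * (\<Sum>k<N. (L2_inner S w (f k))\<^sup>2)" by (simp add: sum_distrib_left)
    also have "\<dots> \<le> tgt\<^sup>2 * L2_inner S w w"
      by (intro mult_left_mono bessel[where I="{..<N}", OF fL' fon' _ _ wL]) auto
    also have "\<dots> \<le> tgt\<^sup>2 * 1" by (intro mult_left_mono Wn[OF wW]) auto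
    finally have "sqrt (\<Sum>k<N. (\<sigma> k * (L2_inner S w (f k) - L2_inner S p (f k)))\<^sup>2) \<le> sqrt (tgt\<^sup>2)"
      by (intro real_sqrt_le_mono) simp
    then show ?thesis unfolding err_def p_def[symmetric] errf[OF wL pL] using tgt_nn by simp
  qed

  have dle_f: "L2_subspace_dim_le S n (fspan n f)" unfolding L2_subspace_dim_le_def using fLn by blast
  have wf_eq: "worst_err S T Op W (fspan n f) = tgt"
  proof (rule antisym)
    show "worst_err S T Op W (fspan n f) \<le> tgt"
      unfolding we using W0 upper by (intro cSUP_least) auto
    show "tgt \<le> worst_err S T Op W (fspan n f)" by (rule lower[OF fLn])
  qed
  have lowV: "tgt \<le> worst_err S T Op W V" if V: "V \<in> {V. L2_subspace_dim_le S n V}" for V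
  proof -
    obtain v where "\<forall>i<n. v i \<in> L2 S" "V = fspan n v"
      using V unfolding L2_subspace_dim_le_def by blast
    then show ?thesis using lower by blast
  qed
  have opt_eq: "optimal_err S T Op W n = tgt"
  proof (rule antisym)
    have "bdd_below ((\<lambda>V. worst_err S T Op W V) ` {V. L2_subspace_dim_le S n V})"
      using lowV by (intro bdd_belowI2) auto
    then have "optimal_err S T Op W n \<le> worst_err S T Op W (fspan n f)"
      unfolding optimal_err_def by (rule cINF_lower) (use dle_f in auto)
    then show "optimal_err S T Op W n \<le> tgt" using wf_eq by simp
    show "tgt \<le> optimal_err S T Op W n"
      unfolding optimal_err_def using dle_f lowV by (intro cINF_greatest) auto
  qed
  have deq: "L2_subspace_dim_eq S n (fspan n f)"
    unfolding L2_subspace_dim_eq_def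
  proof (rule exI[where x=f], intro conjI)
    show "\<forall>i<n. f i \<in> L2 S" by (rule fLn)
    show "fspan n f = fspan n f" ..
    show "\<forall>c. L2_norm S (\<lambda>x. \<Sum>i<n. c i *\<^sub>R f i x) = 0 \<longrightarrow> (\<forall>i<n. c i = 0)"
    proof (intro allI impI)
    fix c i
    assume z: "L2_norm S (\<lambda>x. \<Sum>i<n. c i *\<^sub>R f i x) = 0" and i: "i < n"
    have nN: "{..<n} \<subseteq> {..<N}" using n by auto
    have "L2_inner S (\<lambda>x. \<Sum>i<n. c i *\<^sub>R f i x) (\<lambda>x. \<Sum>i<n. c i *\<^sub>R f i x) = 0"
      using z L2_inner_nonneg unfolding L2_norm_def by simp
    then have "(\<Sum>i<n. c i * c i) = 0" using on_norm[where I="{..<N}", OF fL' fon' _ nN, of c c] by simp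
    then have "\<forall>i\<in>{..<n}. c i * c i = 0" by (subst sum_nonneg_eq_0_iff[symmetric]) auto
    then show "c i = 0" using i by simp
    qed
  qed
  show ?thesis
    using deq wf_eq opt_eq unfolding active_subspace_def W_def[symmetric] tgt_def[symmetric] by simp
qed

theorem theorem4p1:
  fixes A :: "real^'N^'N" and B :: "real^'m^'N" and C :: "real^'N^'p" and D :: "real^'m^'p"
    and \<sigma> :: "nat \<Rightarrow> real"
    and f :: "nat \<Rightarrow> real \<Rightarrow> real^'m" and g :: "nat \<Rightarrow> real \<Rightarrow> real^'p"
    and n :: nat
  assumes stable: "\<And>l. complex_eigenvalue A l \<Longrightarrow> Re l < 0"
    and f_L2: "\<And>i. i \<in> {1..CARD('N)} \<Longrightarrow> f i \<in> L2 {..0}"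
    and g_L2: "\<And>i. i \<in> {1..CARD('N)} \<Longrightarrow> g i \<in> L2 {0<..}"
    and f_on: "\<And>i j. i \<in> {1..CARD('N)} \<Longrightarrow> j \<in> {1..CARD('N)} \<Longrightarrow>
                 L2_inner {..0} (f i) (f j) = (if i = j then 1 else 0)"
    and g_on: "\<And>i j. i \<in> {1..CARD('N)} \<Longrightarrow> j \<in> {1..CARD('N)} \<Longrightarrow>
                 L2_inner {0<..} (g i) (g j) = (if i = j then 1 else 0)"
    and \<sigma>_mono: "\<And>i j. 1 \<le> i \<Longrightarrow> i \<le> j \<Longrightarrow> j \<le> CARD('N) \<Longrightarrow> \<sigma> j \<le> \<sigma> i"
    and \<sigma>_nonneg: "\<And>i. i \<in> {1..CARD('N)} \<Longrightarrow> 0 \<le> \<sigma> i"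
    and svd: "\<And>u. u \<in> L2 {..0} \<Longrightarrow>
                AE t in lborel. t > 0 \<longrightarrow>
                  hankel A B C u t = (\<Sum>i=1..CARD('N). (\<sigma> i * L2_inner {..0} u (f i)) *\<^sub>R g i t)"
    and n: "n \<in> {1..CARD('N)}"
  shows "active_subspace {..0} {0<..} (hankel A B C) {w \<in> L2 {..0}. L2_norm {..0} w \<le> 1} n
           (fspan n (\<lambda>i. f (Suc i)))
       \<and> worst_err {..0} {0<..} (hankel A B C) {w \<in> L2 {..0}. L2_norm {..0} w \<le> 1}
           (fspan n (\<lambda>i. f (Suc i)))
         = optimal_err {..0} {0<..} (hankel A B C) {w \<in> L2 {..0}. L2_norm {..0} w \<le> 1} n
       \<and> optimal_err {..0} {0<..} (hankel A B C) {w \<in> L2 {..0}. L2_norm {..0} w \<le> 1} n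
         = (if n < CARD('N) then \<sigma> (Suc n) else 0)"
proof -
  let ?N = "CARD('N)"
  have svd': "AE t in lborel. t \<in> {0<..} \<longrightarrow> hankel A B C u t =
      (\<Sum>i<?N. ((\<lambda>i. \<sigma> (Suc i)) i * L2_inner {..0} u ((\<lambda>i. f (Suc i)) i)) *\<^sub>R (\<lambda>i. g (Suc i)) i t)"
    if u: "u \<in> L2 {..0}" for u
    using svd[OF u]
  proof eventually_elim
    case (elim t)
    have e: "{1..?N} = {Suc 0..?N}" by simp
    show ?case using elim unfolding e sum.atLeast1_atMost_eq by simp
  qed
  have meas: "hankel A B C u \<in> borel_measurable lborel" if "u \<in> L2 {..0}" for u
    by (rule hankel_meas) (use that in \<open>simp add: L2_def\<close>)
  have "active_subspace {..0} {0<..} (hankel A B C) {w \<in> L2 {..0}. L2_norm {..0} w \<le> 1} n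
           (fspan n (\<lambda>i. f (Suc i)))
       \<and> worst_err {..0} {0<..} (hankel A B C) {w \<in> L2 {..0}. L2_norm {..0} w \<le> 1}
           (fspan n (\<lambda>i. f (Suc i)))
         = optimal_err {..0} {0<..} (hankel A B C) {w \<in> L2 {..0}. L2_norm {..0} w \<le> 1} n
       \<and> optimal_err {..0} {0<..} (hankel A B C) {w \<in> L2 {..0}. L2_norm {..0} w \<le> 1} n
         = (if n < ?N then (\<lambda>i. \<sigma> (Suc i)) n else 0)"
  proof (rule main_abstract[where N="?N"])
    show "{0::real<..} \<in> sets lborel" unfolding sets_lborel by (rule borel_open) simp
    show "\<And>i. i < ?N \<Longrightarrow> f (Suc i) \<in> L2 {..0}" using f_L2 by auto
    show "\<And>i. i < ?N \<Longrightarrow> g (Suc i) \<in> L2 {0<..}" using g_L2 by auto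
    show "\<And>i j. i < ?N \<Longrightarrow> j < ?N \<Longrightarrow> L2_inner {..0} (f (Suc i)) (f (Suc j)) = (if i = j then 1 else 0)"
      using f_on by auto
    show "\<And>i j. i < ?N \<Longrightarrow> j < ?N \<Longrightarrow> L2_inner {0<..} (g (Suc i)) (g (Suc j)) = (if i = j then 1 else 0)"
      using g_on by auto
    show "\<And>i j. i \<le> j \<Longrightarrow> j < ?N \<Longrightarrow> \<sigma> (Suc j) \<le> \<sigma> (Suc i)"
      using \<sigma>_mono by auto
    show "\<And>i. i < ?N \<Longrightarrow> 0 \<le> \<sigma> (Suc i)" using \<sigma>_nonneg by auto
    show "\<And>u. u \<in> L2 {..0} \<Longrightarrow> AE t in lborel. t \<in> {0<..} \<longrightarrow> hankel A B C u t =
      (\<Sum>i<?N. (\<sigma> (Suc i) * L2_inner {..0} u (f (Suc i))) *\<^sub>R g (Suc i) t)"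
      using svd' by simp
    show "\<And>u. u \<in> L2 {..0} \<Longrightarrow> hankel A B C u \<in> borel_measurable lborel" by (rule meas)
    show "n \<le> ?N" using n by simp
  qed
  then show ?thesis by simp
qed

end
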